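(* Let $\kappa\ge 1$ and $n\ge 1$ be integers, let $0\le\epsilon<1$, and let $q=(q_0,\dots,q_{2^\kappa-1})\in\mathbb{R}^{2^\kappa}$ satisfy $q_i\ge 0$ for all $i$ and $\sum_{i=0}^{2^\kappa-1}q_i=1$. Then for every subspace $S$ of $W=\mathbb{F}_2^\kappa$, $\psi(S,n,\epsilon,q)\ge 0$.
   Context: $W=\mathbb{F}_2^\kappa$. For $i\in\{0,\dots,2^\kappa-1\}$, $\nu(i)\in W$ denotes the binary expansion of $i$. For a subspace $S\subseteq W$ and $q\in\mathbb{R}^{2^\kappa}$ (indexed from $0$), $\zeta(S,q)=\sum_{i:\nu(i)\in S}q_i$. For a subspace $S$ and integer $d$, $\Xi(S,d)$ is the set of all $d$-dimensional subspaces of $S$. Define $\phi(S,n,\epsilon,q)=\epsilon^{n(1-\zeta(S,q))}$ (with the convention $0^0=1$), and define $\psi$ recursively on the dimension $d$ of $S$ by $\psi(S,n,\epsilon,q)=\phi(S,n,\epsilon,q)-\sum_{i=0}^{d-1}\sum_{T\in\Xi(S,i)}\psi(T,n,\epsilon,q)$ (so for $d=0$, $\psi(\{0\})=\phi(\{0\})$). *)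

theory Defs
  imports Complex_Main
begin

text \<open>W = F_2^kappa, vectors represented as bool lists of length kappa
  (True = 1, False = 0); addition is componentwise xor.\<close>

definition W :: "nat \<Rightarrow> bool list set" where
  "W \<kappa> = {v. length v = \<kappa>}"

definition zerov :: "nat \<Rightarrow> bool list" where
  "zerov \<kappa> = replicate \<kappa> False"

definition vadd :: "bool list \<Rightarrow> bool list \<Rightarrow> bool list" where
  "vadd u v = map2 (\<noteq>) u v"

definition nu :: "nat \<Rightarrow> nat \<Rightarrow> bool list" where
  "nu \<kappa> i = map (\<lambda>j. odd (i div 2 ^ j)) [0..<\<kappa>]"

text \<open>Subspace of F_2^kappa (scalars are only 0 and 1).\<close>
definition subspace2 :: "nat \<Rightarrow> bool list set \<Rightarrow> bool" where
  "subspace2 \<kappa> S \<longleftrightarrow> S \<subseteq> W \<kappa> \<and> zerov \<kappa> \<in> S \<and> (\<forall>u\<in>S. \<forall>v\<in>S. vadd u v \<in> S)"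

text \<open>F_2-sum of a finite set of vectors (linear combination with coefficients 1).\<close>
definition vsum :: "nat \<Rightarrow> bool list set \<Rightarrow> bool list" where
  "vsum \<kappa> A = map (\<lambda>j. odd (card {v\<in>A. v ! j})) [0..<\<kappa>]"

definition span2 :: "nat \<Rightarrow> bool list set \<Rightarrow> bool list set" where
  "span2 \<kappa> B = {vsum \<kappa> A | A. A \<subseteq> B}"

definition indep2 :: "nat \<Rightarrow> bool list set \<Rightarrow> bool" where
  "indep2 \<kappa> B \<longleftrightarrow> (\<forall>A\<subseteq>B. A \<noteq> {} \<longrightarrow> vsum \<kappa> A \<noteq> zerov \<kappa>)"

definition is_basis2 :: "nat \<Rightarrow> bool list set \<Rightarrow> bool list set \<Rightarrow> bool" where
  "is_basis2 \<kappa> S B \<longleftrightarrow> finite B \<and> B \<subseteq> S \<and> indep2 \<kappa> B \<and> span2 \<kappa> B = S"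

definition dim2 :: "nat \<Rightarrow> bool list set \<Rightarrow> nat" where
  "dim2 \<kappa> S = card (SOME B. is_basis2 \<kappa> S B)"

definition Xi :: "nat \<Rightarrow> bool list set \<Rightarrow> nat \<Rightarrow> bool list set set" where
  "Xi \<kappa> S d = {T. subspace2 \<kappa> T \<and> T \<subseteq> S \<and> dim2 \<kappa> T = d}"

definition zeta :: "nat \<Rightarrow> bool list set \<Rightarrow> (nat \<Rightarrow> real) \<Rightarrow> real" where
  "zeta \<kappa> S q = (\<Sum>i\<in>{i. i < 2 ^ \<kappa> \<and> nu \<kappa> i \<in> S}. q i)"

definition phi :: "nat \<Rightarrow> bool list set \<Rightarrow> nat \<Rightarrow> real \<Rightarrow> (nat \<Rightarrow> real) \<Rightarrow> real" where
  "phi \<kappa> S n \<epsilon> q = (let e = real n * (1 - zeta \<kappa> S q) in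
      if \<epsilon> = 0 \<and> e = 0 then 1 else \<epsilon> powr e)"

text \<open>Recursion on dimension, implemented with a fuel argument k (always called with
  k = dim S; for k \<ge> dim T the value does not depend on k).\<close>
fun psi_aux :: "nat \<Rightarrow> nat \<Rightarrow> bool list set \<Rightarrow> nat \<Rightarrow> real \<Rightarrow> (nat \<Rightarrow> real) \<Rightarrow> real" where
  "psi_aux \<kappa> 0 S n \<epsilon> q = phi \<kappa> S n \<epsilon> q"
| "psi_aux \<kappa> (Suc k) S n \<epsilon> q = phi \<kappa> S n \<epsilon> q
     - (\<Sum>i<dim2 \<kappa> S. \<Sum>T\<in>Xi \<kappa> S i. psi_aux \<kappa> k T n \<epsilon> q)"

definition psi :: "nat \<Rightarrow> bool list set \<Rightarrow> nat \<Rightarrow> real \<Rightarrow> (nat \<Rightarrow> real) \<Rightarrow> real" where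
  "psi \<kappa> S n \<epsilon> q = psi_aux \<kappa> (dim2 \<kappa> S) S n \<epsilon> q"

end

theory Submission imports Defs begin

lemma finite_W: "finite (W k)"
proof -
  have "W k = {xs. set xs \<subseteq> (UNIV::bool set) \<and> length xs = k}" by (auto simp: W_def)
  thus ?thesis using finite_lists_length_eq[of "UNIV::bool set" k] by simp
qed

lemma vadd_len: "length (vadd u v) = min (length u) (length v)"
  by (simp add: vadd_def)

lemma vadd_nth: "j < length u \<Longrightarrow> j < length v \<Longrightarrow> vadd u v ! j = (u ! j \<noteq> v ! j)"
  by (simp add: vadd_def)

lemma vsum_len[simp]: "length (vsum k A) = k" by (simp add: vsum_def)
lemma vsum_nth: "j < k \<Longrightarrow> vsum k A ! j = odd (card {v\<in>A. v ! j})" by (simp add: vsum_def)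

lemma zerov_len[simp]: "length (zerov k) = k" by (simp add: zerov_def)

lemma vsum_empty: "vsum k {} = zerov k"
  by (simp add: vsum_def zerov_def map_replicate_const)

lemma vsum_union:
  assumes "finite A" "finite C" "A \<inter> C = {}"
  shows "vsum k (A \<union> C) = vadd (vsum k A) (vsum k C)"
proof (rule nth_equalityI)
  show "length (vsum k (A \<union> C)) = length (vadd (vsum k A) (vsum k C))" by (simp add: vadd_len)
  fix j assume "j < length (vsum k (A \<union> C))"
  hence j: "j < k" by simp
  have "{v\<in>A \<union> C. v ! j} = {v\<in>A. v ! j} \<union> {v\<in>C. v ! j}" by auto
  hence "card {v\<in>A \<union> C. v ! j} = card {v\<in>A. v ! j} + card {v\<in>C. v ! j}"
    using assms by (simp add: card_Un_disjoint disjoint_iff)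
  thus "vsum k (A \<union> C) ! j = vadd (vsum k A) (vsum k C) ! j"
    using j by (simp add: vsum_nth vadd_nth)
qed

lemma vsum_single: "length x = k \<Longrightarrow> vsum k {x} = x"
proof (rule nth_equalityI)
  fix j assume "length x = k" "j < length (vsum k {x})"
  moreover have "{v\<in>{x}. v ! j} = (if x ! j then {x} else {})" by auto
  ultimately show "vsum k {x} ! j = x ! j" by (simp add: vsum_nth)
qed simp

lemma vadd_cancel:
  assumes "length a = k" "length b = k" "length c = k" "vadd a b = vadd a c"
  shows "b = c"
proof (rule nth_equalityI)
  fix j assume "j < length b"
  have "vadd a b ! j = vadd a c ! j" using assms(4) by simp
  hence "(a ! j \<noteq> b ! j) = (a ! j \<noteq> c ! j)" using assms(1-3) \<open>j < length b\<close> by (simp add: vadd_nth)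
  thus "b ! j = c ! j" by blast
qed (use assms in simp)

lemma vadd_self: "length a = k \<Longrightarrow> vadd a a = zerov k"
  by (rule nth_equalityI) (auto simp: vadd_len vadd_nth zerov_def)

lemma vadd_zero: "length a = k \<Longrightarrow> vadd a (zerov k) = a"
  by (rule nth_equalityI) (auto simp: vadd_len vadd_nth zerov_def)

lemma vsum_in_subspace:
  assumes "subspace2 k S" "finite A" "A \<subseteq> S"
  shows "vsum k A \<in> S"
  using assms(2,3)
proof (induction A rule: finite_induct)
  case empty thus ?case using assms(1) by (simp add: vsum_empty subspace2_def)
next
  case (insert x A)
  have "x \<in> S" using insert by auto
  hence "length x = k" using assms(1) by (auto simp: subspace2_def W_def)
  have "vsum k (insert x A) = vsum k ({x} \<union> A)" by simp
  also have "\<dots> = vadd (vsum k {x}) (vsum k A)" using insert by (intro vsum_union) auto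
  also have "\<dots> = vadd x (vsum k A)" using \<open>length x = k\<close> by (simp add: vsum_single)
  finally show ?case using insert assms(1) \<open>x \<in> S\<close> unfolding subspace2_def by auto
qed

lemma vsum_inj:
  assumes "indep2 k B" "finite B"
  shows "inj_on (vsum k) (Pow B)"
proof (rule inj_onI)
  fix A A' assume A: "A \<in> Pow B" and A': "A' \<in> Pow B" and eq: "vsum k A = vsum k A'"
  have fin: "finite X" if "X \<subseteq> B" for X using assms(2) that finite_subset by blast
  let ?C = "A \<inter> A'" and ?D1 = "A - A'" and ?D2 = "A' - A"
  have "vsum k A = vadd (vsum k ?C) (vsum k ?D1)"
  proof -
    have "A = ?C \<union> ?D1" by auto
    hence "vsum k A = vsum k (?C \<union> ?D1)" by simp
    also have "\<dots> = vadd (vsum k ?C) (vsum k ?D1)" using A fin by (intro vsum_union) auto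
    finally show ?thesis .
  qed
  moreover have "vsum k A' = vadd (vsum k ?C) (vsum k ?D2)"
  proof -
    have "A' = ?C \<union> ?D2" by auto
    hence "vsum k A' = vsum k (?C \<union> ?D2)" by simp
    also have "\<dots> = vadd (vsum k ?C) (vsum k ?D2)" using A' fin by (intro vsum_union) auto
    finally show ?thesis .
  qed
  ultimately have e2: "vadd (vsum k ?C) (vsum k ?D1) = vadd (vsum k ?C) (vsum k ?D2)" using eq by simp
  have "vsum k ?D1 = vsum k ?D2" by (rule vadd_cancel[OF _ _ _ e2]) simp_all
  hence "vsum k (?D1 \<union> ?D2) = zerov k"
    using A A' fin by (subst vsum_union) (auto intro: vadd_self)
  moreover have "?D1 \<union> ?D2 \<subseteq> B" using A A' by auto
  ultimately have "?D1 \<union> ?D2 = {}" using assms(1)[unfolded indep2_def, rule_format, of "?D1 \<union> ?D2"] by auto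
  thus "A = A'" by blast
qed

lemma basis_card:
  assumes "is_basis2 k S B"
  shows "card S = 2 ^ card B"
proof -
  have "S = vsum k ` Pow B" using assms by (auto simp: is_basis2_def span2_def)
  hence "card S = card (Pow B)" using vsum_inj[of k B] assms
    by (simp add: is_basis2_def card_image)
  thus ?thesis using assms by (simp add: is_basis2_def card_Pow)
qed

lemma basis_exists:
  assumes "subspace2 k S"
  shows "\<exists>B. is_basis2 k S B"
proof -
  have finS: "finite S" using assms finite_W finite_subset by (auto simp: subspace2_def)
  let ?F = "{B. B \<subseteq> S \<and> indep2 k B}"
  have "finite ?F" using finS by simp
  moreover have "{} \<in> ?F" by (simp add: indep2_def)
  ultimately have ne: "card ` ?F \<noteq> {}" "finite (card ` ?F)" by auto
  obtain B where B: "B \<in> ?F" and cB: "card B = Max (card ` ?F)"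
    using Max_in[OF ne(2) ne(1)] by (auto simp del: Collect_subset)
  have mx: "card B' \<le> card B" if "B' \<in> ?F" for B'
    unfolding cB by (rule Max_ge[OF ne(2)]) (use that in blast)
  have finB: "finite B" using B finS finite_subset by auto
  have "span2 k B \<subseteq> S" using B finB assms
    by (auto simp: span2_def intro!: vsum_in_subspace dest: finite_subset)
  moreover have "S \<subseteq> span2 k B"
  proof
    fix v assume v: "v \<in> S"
    show "v \<in> span2 k B"
    proof (rule ccontr)
      assume nv: "v \<notin> span2 k B"
      have lv: "length v = k" using v assms by (auto simp: subspace2_def W_def)
      have "v \<notin> B"
      proof
        assume "v \<in> B" hence "vsum k {v} \<in> span2 k B" by (auto simp: span2_def)
        thus False using nv lv vsum_single by simp
      qed
      have "indep2 k (insert v B)"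
        unfolding indep2_def
      proof (intro allI impI)
        fix A assume A: "A \<subseteq> insert v B" "A \<noteq> {}"
        show "vsum k A \<noteq> zerov k"
        proof (cases "v \<in> A")
          case False thus ?thesis using A B unfolding indep2_def by blast
        next
          case True
          have finA: "finite (A - {v})" using A finB finite_subset by blast
          have "vsum k A = vsum k ({v} \<union> (A - {v}))" using True by (metis insert_Diff insert_is_Un)
          also have "\<dots> = vadd v (vsum k (A - {v}))"
            using finA lv by (subst vsum_union) (auto simp: vsum_single)
          finally have e: "vsum k A = vadd v (vsum k (A - {v}))" .
          show ?thesis
          proof
            assume "vsum k A = zerov k"
            hence "vadd v (vsum k (A - {v})) = vadd v v" using e lv vadd_self by simp
            hence "vsum k (A - {v}) = v" by (rule vadd_cancel[OF lv vsum_len lv])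
            moreover have "A - {v} \<subseteq> B" using A by auto
            ultimately show False using nv by (auto simp: span2_def)
          qed
        qed
      qed
      hence "insert v B \<in> ?F" using B v by auto
      hence "card (insert v B) \<le> card B" by (rule mx)
      thus False using \<open>v \<notin> B\<close> finB by simp
    qed
  qed
  ultimately show ?thesis using B finB by (auto simp: is_basis2_def)
qed

lemma card_dim:
  assumes "subspace2 k S"
  shows "card S = 2 ^ dim2 k S"
  using basis_card someI_ex[OF basis_exists[OF assms]] unfolding dim2_def by blast

lemma dim_less:
  assumes "subspace2 k S" "subspace2 k T" "T \<subseteq> S" "T \<noteq> S"
  shows "dim2 k T < dim2 k S"
proof -
  have "finite S" using assms finite_W finite_subset by (auto simp: subspace2_def)
  hence "card T < card S" using assms by (meson psubset_card_mono psubsetI)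
  thus ?thesis using card_dim assms by (metis power_less_imp_less_exp one_less_numeral_iff semiring_norm(76))
qed


definition cl :: "nat \<Rightarrow> bool list set \<Rightarrow> bool list set" where
  "cl k X = \<Inter>{T. subspace2 k T \<and> X \<subseteq> T}"

definition aw :: "nat \<Rightarrow> real \<Rightarrow> (nat \<Rightarrow> real) \<Rightarrow> nat \<Rightarrow> real" where
  "aw n \<epsilon> q i = (if \<epsilon> = 0 then (if q i = 0 then 1 else 0) else \<epsilon> powr (real n * q i))"

definition wt :: "nat \<Rightarrow> nat \<Rightarrow> real \<Rightarrow> (nat \<Rightarrow> real) \<Rightarrow> nat set \<Rightarrow> real" where
  "wt k n \<epsilon> q R = (\<Prod>i\<in>R. 1 - aw n \<epsilon> q i) * (\<Prod>i\<in>{..<2^k} - R. aw n \<epsilon> q i)"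

definition gg :: "nat \<Rightarrow> nat \<Rightarrow> real \<Rightarrow> (nat \<Rightarrow> real) \<Rightarrow> bool list set \<Rightarrow> real" where
  "gg k n \<epsilon> q T = (\<Sum>R\<in>{R\<in>Pow {..<2^k}. cl k (nu k ` R) = T}. wt k n \<epsilon> q R)"

lemma subspace_W: "subspace2 k (W k)"
  by (auto simp: subspace2_def W_def vadd_len)

lemma nu_W: "nu k i \<in> W k" by (simp add: nu_def W_def)

lemma cl_sub: assumes "X \<subseteq> W k" shows "subspace2 k (cl k X)"
proof -
  have "W k \<in> {T. subspace2 k T \<and> X \<subseteq> T}" using assms subspace_W by auto
  thus ?thesis unfolding subspace2_def cl_def by (auto simp: subspace2_def)
qed

lemma cl_le: assumes "subspace2 k S" shows "cl k X \<subseteq> S \<longleftrightarrow> X \<subseteq> S"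
  using assms unfolding cl_def by blast

lemma aw_bounds:
  assumes "0 \<le> \<epsilon>" "\<epsilon> < 1" "q i \<ge> 0"
  shows "0 \<le> aw n \<epsilon> q i" "aw n \<epsilon> q i \<le> 1"
  using assms by (auto simp: aw_def intro!: powr_le1)

lemma gg_nonneg:
  assumes "0 \<le> \<epsilon>" "\<epsilon> < 1" "\<forall>i<2 ^ k. q i \<ge> 0"
  shows "gg k n \<epsilon> q T \<ge> 0"
proof -
  have "wt k n \<epsilon> q R \<ge> 0" if "R \<subseteq> {..<2^k}" for R
    unfolding wt_def using that assms aw_bounds[OF assms(1,2)]
    by (intro mult_nonneg_nonneg prod_nonneg) (auto simp: subset_iff)
  thus ?thesis unfolding gg_def by (intro sum_nonneg) auto
qed

lemma phi_prod:
  assumes "n \<ge> 1" "0 \<le> \<epsilon>" "\<epsilon> < 1" "\<forall>i<2 ^ k. q i \<ge> 0" "(\<Sum>i<2 ^ k. q i) = 1"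
  shows "phi k S n \<epsilon> q = (\<Prod>i\<in>{i. i < 2^k \<and> nu k i \<notin> S}. aw n \<epsilon> q i)"
proof -
  let ?J = "{i. i < 2^k \<and> nu k i \<in> S}" and ?K = "{i. i < 2^k \<and> nu k i \<notin> S}"
  have U: "{..<2^k} = ?J \<union> ?K" by auto
  have "(\<Sum>i<2 ^ k. q i) = sum q ?J + sum q ?K"
    unfolding U by (rule sum.union_disjoint) auto
  hence s: "1 - zeta k S q = sum q ?K" using assms(5) by (simp add: zeta_def)
  have qK: "\<forall>i\<in>?K. q i \<ge> 0" using assms(4) by auto
  show ?thesis
  proof (cases "\<epsilon> = 0")
    case True
    have fin: "finite ?K" by auto
    have "real n * sum q ?K = 0 \<longleftrightarrow> sum q ?K = 0" using assms(1) by simp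
    also have "\<dots> \<longleftrightarrow> (\<forall>i\<in>?K. q i = 0)" using sum_nonneg_eq_0_iff[OF fin] qK by blast
    finally have e: "real n * sum q ?K = 0 \<longleftrightarrow> (\<forall>i\<in>?K. q i = 0)" .
    show ?thesis
    proof (cases "\<forall>i\<in>?K. q i = 0")
      case c: True
      hence "(\<Prod>i\<in>?K. aw n \<epsilon> q i) = 1" using True by (intro prod.neutral) (auto simp: aw_def)
      thus ?thesis using c e True s by (simp add: phi_def Let_def)
    next
      case c: False
      then obtain i where "i \<in> ?K" "q i \<noteq> 0" by blast
      hence "(\<Prod>i\<in>?K. aw n \<epsilon> q i) = 0" using True fin
        by (subst prod_zero_iff) (auto simp: aw_def)
      moreover have "real n * sum q ?K \<noteq> 0" using c e by blast
      ultimately show ?thesis using True s by (simp add: phi_def Let_def)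
    qed
  next
    case False
    have "phi k S n \<epsilon> q = \<epsilon> powr (real n * sum q ?K)" using False s by (simp add: phi_def Let_def)
    also have "\<dots> = \<epsilon> powr (\<Sum>i\<in>?K. real n * q i)" by (simp add: sum_distrib_left)
    also have "\<dots> = (\<Prod>i\<in>?K. \<epsilon> powr (real n * q i))" using False by (rule powr_sum)
    also have "\<dots> = (\<Prod>i\<in>?K. aw n \<epsilon> q i)" using False by (simp add: aw_def)
    finally show ?thesis .
  qed
qed

lemma phi_sum:
  assumes "n \<ge> 1" "0 \<le> \<epsilon>" "\<epsilon> < 1" "\<forall>i<2 ^ k. q i \<ge> 0" "(\<Sum>i<2 ^ k. q i) = 1"
  shows "phi k S n \<epsilon> q = (\<Sum>R\<in>{R\<in>Pow {..<2^k}. nu k ` R \<subseteq> S}. wt k n \<epsilon> q R)"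
proof -
  let ?J = "{i. i < 2^k \<and> nu k i \<in> S}" and ?K = "{i. i < 2^k \<and> nu k i \<notin> S}"
  let ?a = "aw n \<epsilon> q"
  have P: "{R\<in>Pow {..<2^k}. nu k ` R \<subseteq> S} = Pow ?J" by auto
  have "(\<Sum>R\<in>Pow ?J. wt k n \<epsilon> q R)
      = (\<Sum>R\<in>Pow ?J. ((\<Prod>i\<in>R. 1 - ?a i) * (\<Prod>i\<in>?J - R. ?a i)) * (\<Prod>i\<in>?K. ?a i))"
  proof (rule sum.cong[OF refl])
    fix R assume R: "R \<in> Pow ?J"
    have "{..<2^k} - R = (?J - R) \<union> ?K" using R by auto
    hence "(\<Prod>i\<in>{..<2^k} - R. ?a i) = (\<Prod>i\<in>?J - R. ?a i) * (\<Prod>i\<in>?K. ?a i)"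
      by (simp, subst prod.union_disjoint) auto
    thus "wt k n \<epsilon> q R = ((\<Prod>i\<in>R. 1 - ?a i) * (\<Prod>i\<in>?J - R. ?a i)) * (\<Prod>i\<in>?K. ?a i)"
      by (simp add: wt_def)
  qed
  also have "\<dots> = (\<Sum>R\<in>Pow ?J. (\<Prod>i\<in>R. 1 - ?a i) * (\<Prod>i\<in>?J - R. ?a i)) * (\<Prod>i\<in>?K. ?a i)"
    by (simp add: sum_distrib_right)
  also have "(\<Sum>R\<in>Pow ?J. (\<Prod>i\<in>R. 1 - ?a i) * (\<Prod>i\<in>?J - R. ?a i)) = (\<Prod>i\<in>?J. (1 - ?a i) + ?a i)"
    by (rule prod_add[symmetric]) auto
  also have "\<dots> = 1" by simp
  finally show ?thesis unfolding P using phi_prod[OF assms] by simp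
qed

lemma phi_gg:
  assumes "n \<ge> 1" "0 \<le> \<epsilon>" "\<epsilon> < 1" "\<forall>i<2 ^ k. q i \<ge> 0" "(\<Sum>i<2 ^ k. q i) = 1"
    and S: "subspace2 k S"
  shows "phi k S n \<epsilon> q = (\<Sum>T\<in>{T. subspace2 k T \<and> T \<subseteq> S}. gg k n \<epsilon> q T)"
proof -
  let ?A = "{R\<in>Pow {..<2^k}. nu k ` R \<subseteq> S}" and ?Ts = "{T. subspace2 k T \<and> T \<subseteq> S}"
  let ?g = "\<lambda>R. cl k (nu k ` R)"
  have finS: "finite S" using S finite_W finite_subset by (auto simp: subspace2_def)
  have finT: "finite ?Ts" by (rule finite_subset[of _ "Pow S"]) (use finS in auto)
  have nuW: "nu k ` R \<subseteq> W k" for R using nu_W by auto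
  have img: "?g ` ?A \<subseteq> ?Ts" using cl_sub[OF nuW] cl_le[OF S] by auto
  have "phi k S n \<epsilon> q = sum (wt k n \<epsilon> q) ?A" by (rule phi_sum[OF assms(1-5)])
  also have "\<dots> = (\<Sum>T\<in>?Ts. sum (wt k n \<epsilon> q) {R. R \<in> ?A \<and> ?g R = T})"
    by (rule sum.group[symmetric, OF _ finT img]) auto
  also have "\<dots> = (\<Sum>T\<in>?Ts. gg k n \<epsilon> q T)"
  proof (rule sum.cong[OF refl])
    fix T assume "T \<in> ?Ts"
    hence "{R. R \<in> ?A \<and> ?g R = T} = {R\<in>Pow {..<2^k}. cl k (nu k ` R) = T}"
      using cl_le[OF S] by (auto simp: image_subset_iff)
    thus "sum (wt k n \<epsilon> q) {R. R \<in> ?A \<and> ?g R = T} = gg k n \<epsilon> q T" by (simp add: gg_def)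
  qed
  finally show ?thesis .
qed

lemma psi_aux_gg:
  assumes "n \<ge> 1" "0 \<le> \<epsilon>" "\<epsilon> < 1" "\<forall>i<2 ^ k. q i \<ge> 0" "(\<Sum>i<2 ^ k. q i) = 1"
  shows "subspace2 k T \<Longrightarrow> dim2 k T \<le> m \<Longrightarrow> psi_aux k m T n \<epsilon> q = gg k n \<epsilon> q T"
proof (induction m arbitrary: T)
  case 0
  have "{T'. subspace2 k T' \<and> T' \<subseteq> T} = {T}"
    using dim_less[OF 0(1)] 0 by fastforce
  thus ?case using phi_gg[OF assms 0(1)] by simp
next
  case (Suc m)
  let ?Ts = "{T'. subspace2 k T' \<and> T' \<subseteq> T}"
  have finS: "finite T" using Suc finite_W finite_subset by (auto simp: subspace2_def)
  have finT: "finite ?Ts" by (rule finite_subset[of _ "Pow T"]) (use finS in auto)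
  have "(\<Sum>i<dim2 k T. \<Sum>T'\<in>Xi k T i. psi_aux k m T' n \<epsilon> q)
      = (\<Sum>i<dim2 k T. \<Sum>T'\<in>{x. x \<in> ?Ts - {T} \<and> dim2 k x = i}. gg k n \<epsilon> q T')"
  proof (rule sum.cong[OF refl])
    fix i assume i: "i \<in> {..<dim2 k T}"
    have X: "Xi k T i = {x. x \<in> ?Ts - {T} \<and> dim2 k x = i}" using i by (auto simp: Xi_def)
    show "(\<Sum>T'\<in>Xi k T i. psi_aux k m T' n \<epsilon> q) = (\<Sum>T'\<in>{x. x \<in> ?Ts - {T} \<and> dim2 k x = i}. gg k n \<epsilon> q T')"
      unfolding X using Suc i by (intro sum.cong[OF refl] Suc.IH) auto
  qed
  also have "\<dots> = (\<Sum>T'\<in>?Ts - {T}. gg k n \<epsilon> q T')"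
    using dim_less[OF Suc(2)] by (intro sum.group) (use finT in auto)
  finally have e: "(\<Sum>i<dim2 k T. \<Sum>T'\<in>Xi k T i. psi_aux k m T' n \<epsilon> q) = (\<Sum>T'\<in>?Ts - {T}. gg k n \<epsilon> q T')" .
  have "phi k T n \<epsilon> q = gg k n \<epsilon> q T + (\<Sum>T'\<in>?Ts - {T}. gg k n \<epsilon> q T')"
    using phi_gg[OF assms Suc(2)] finT Suc(2) by (simp add: sum.remove)
  thus ?case using e by simp
qed

theorem lemma1:
  fixes \<kappa> n :: nat and \<epsilon> :: real and q :: "nat \<Rightarrow> real" and S :: "bool list set"
  assumes "\<kappa> \<ge> 1" and "n \<ge> 1"
    and "0 \<le> \<epsilon>" and "\<epsilon> < 1"
    and "\<forall>i<2 ^ \<kappa>. q i \<ge> 0"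
    and "(\<Sum>i<2 ^ \<kappa>. q i) = 1"
    and "subspace2 \<kappa> S"
  shows "psi \<kappa> S n \<epsilon> q \<ge> 0"
proof -
  have "psi \<kappa> S n \<epsilon> q = gg \<kappa> n \<epsilon> q S"
    unfolding psi_def using psi_aux_gg[OF assms(2-6) assms(7)] by simp
  thus ?thesis using gg_nonneg[OF assms(3-5)] by simp
qed

end
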